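(* Let $d\ge 1$ and $n\ge d+2$. Any linear automorphism ${\bf A}$ of $M_{d,n}$ is a linear automorphism of $M_{1,n}$.
   Context: Let $N=\binom n2$, coordinates of $\mathbb C^N$ indexed by edges $\{i,j\}$ of $K_n$. For a complex configuration ${\bf p}$ of $n$ points in $\mathbb C^d$, $m({\bf p})$ has coordinates $m_{ij}=\sum_{k=1}^d({\bf p}_i^k-{\bf p}_j^k)^2$ (no conjugation); $M_{d,n}\subset\mathbb C^N$ is the image of $m$ over all complex configurations in $\mathbb C^d$ (and $M_{1,n}$ the analogous image for configurations in $\mathbb C^1$). A linear automorphism of a variety $V\subset\mathbb C^N$ is a non-singular $N\times N$ complex matrix mapping $V$ bijectively onto itself. *)

theory Defs
  imports Main "HOL-Analysis.Analysis"
begin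

text \<open>Edges {i,j} of K_n, represented as ordered pairs (i,j) with i < j < n
  (points indexed 0..n-1).  Vectors of C^N, N = n choose 2, are functions on
  pairs that vanish outside the edge set.\<close>

definition edges :: "nat \<Rightarrow> (nat \<times> nat) set" where
  "edges n = {(i, j). i < j \<and> j < n}"

definition cvecs :: "nat \<Rightarrow> ((nat \<times> nat) \<Rightarrow> complex) set" where
  "cvecs n = {v. \<forall>e. e \<notin> edges n \<longrightarrow> v e = 0}"

text \<open>A configuration of n points in C^d: p i k is the k-th coordinate
  (k < d) of point i.  The squared-length map, without conjugation.\<close>

definition mmap :: "nat \<Rightarrow> nat \<Rightarrow> (nat \<Rightarrow> nat \<Rightarrow> complex) \<Rightarrow> ((nat \<times> nat) \<Rightarrow> complex)" where
  "mmap d n p = (\<lambda>(i, j). if (i, j) \<in> edges n then (\<Sum>k<d. (p i k - p j k)^2) else 0)"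

definition Mvar :: "nat \<Rightarrow> nat \<Rightarrow> ((nat \<times> nat) \<Rightarrow> complex) set" where
  "Mvar d n = range (mmap d n)"

definition matvec :: "nat \<Rightarrow> ((nat \<times> nat) \<Rightarrow> (nat \<times> nat) \<Rightarrow> complex)
    \<Rightarrow> ((nat \<times> nat) \<Rightarrow> complex) \<Rightarrow> ((nat \<times> nat) \<Rightarrow> complex)" where
  "matvec n A v = (\<lambda>e. if e \<in> edges n then (\<Sum>f\<in>edges n. A e f * v f) else 0)"

definition nonsingular :: "nat \<Rightarrow> ((nat \<times> nat) \<Rightarrow> (nat \<times> nat) \<Rightarrow> complex) \<Rightarrow> bool" where
  "nonsingular n A \<longleftrightarrow> (\<forall>v\<in>cvecs n. matvec n A v = (\<lambda>_. 0) \<longrightarrow> v = (\<lambda>_. 0))"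

definition linear_automorphism :: "nat \<Rightarrow> ((nat \<times> nat) \<Rightarrow> (nat \<times> nat) \<Rightarrow> complex)
    \<Rightarrow> ((nat \<times> nat) \<Rightarrow> complex) set \<Rightarrow> bool" where
  "linear_automorphism n A V \<longleftrightarrow> nonsingular n A \<and> bij_betw (matvec n A) V V"

end

theory Submission
  imports Defs
begin


definition quad :: "nat \<Rightarrow> (nat \<Rightarrow> nat \<Rightarrow> complex) \<Rightarrow> (nat \<Rightarrow> complex) \<Rightarrow> complex" where
  "quad r B z = (\<Sum>i<r. \<Sum>j<r. B i j * z i * z j)"

definition sos :: "nat \<Rightarrow> ((nat \<Rightarrow> complex) \<Rightarrow> complex) \<Rightarrow> bool" where
  "sos r q \<longleftrightarrow> (\<exists>u. \<forall>z. q z = (\<Sum>l<r. (\<Sum>i<r. u l i * z i)^2))"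

lemma quad_Suc:
  "quad (Suc r) B z = B r r * (z r)^2 + z r * (\<Sum>j<r. (B r j + B j r) * z j) + quad r B z"
  by (simp add: quad_def sum.distrib sum_distrib_left power2_eq_square algebra_simps)

lemma quad_subst:
  "quad m B (\<lambda>i. \<Sum>j<m. M i j * z j) = quad m (\<lambda>a b. \<Sum>i<m. \<Sum>j<m. B i j * M i a * M j b) z"
proof -
  have "quad m B (\<lambda>i. \<Sum>j<m. M i j * z j) = (\<Sum>i<m. \<Sum>j<m. \<Sum>a<m. \<Sum>b<m. B i j * M i a * M j b * z a * z b)"
    unfolding quad_def by (simp add: sum_distrib_left sum_distrib_right mult_ac)
  also have "\<dots> = (\<Sum>i<m. \<Sum>a<m. \<Sum>j<m. \<Sum>b<m. B i j * M i a * M j b * z a * z b)"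
    by (rule sum.cong[OF refl], rule sum.swap)
  also have "\<dots> = (\<Sum>a<m. \<Sum>i<m. \<Sum>j<m. \<Sum>b<m. B i j * M i a * M j b * z a * z b)"
    by (rule sum.swap)
  also have "\<dots> = (\<Sum>a<m. \<Sum>i<m. \<Sum>b<m. \<Sum>j<m. B i j * M i a * M j b * z a * z b)"
    by (rule sum.cong[OF refl], rule sum.cong[OF refl], rule sum.swap)
  also have "\<dots> = (\<Sum>a<m. \<Sum>b<m. \<Sum>i<m. \<Sum>j<m. B i j * M i a * M j b * z a * z b)"
    by (rule sum.cong[OF refl], rule sum.swap)
  also have "\<dots> = quad m (\<lambda>a b. \<Sum>i<m. \<Sum>j<m. B i j * M i a * M j b) z"
    unfolding quad_def by (simp add: sum_distrib_right)
  finally show ?thesis .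
qed

lemma sos_case1:
  assumes IH: "\<And>B. sos r (quad r B)" and b: "B r r \<noteq> 0"
  shows "sos (Suc r) (quad (Suc r) B)"
proof -
  define \<beta> where "\<beta> = B r r"
  define L where "L = (\<lambda>j. B r j + B j r)"
  define B' where "B' = (\<lambda>i j. B i j - L i * L j / (4 * \<beta>))"
  obtain u where u: "\<And>z. quad r B' z = (\<Sum>l<r. (\<Sum>i<r. u l i * z i)^2)"
    using IH[of B'] unfolding sos_def by blast
  define s where "s = csqrt \<beta>"
  have s2: "s^2 = \<beta>" unfolding s_def by simp
  define u' where "u' = (\<lambda>l i. if l < r then (if i < r then u l i else 0)
      else (if i < r then s * L i / (2 * \<beta>) else s))"
  show ?thesis unfolding sos_def
  proof (intro exI allI)
    fix z
    define \<Lambda> where "\<Lambda> = (\<Sum>i<r. L i * z i)"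
    have q1: "quad r B' z = quad r B z - \<Lambda>^2 / (4*\<beta>)"
      unfolding quad_def B'_def \<Lambda>_def
      by (simp add: algebra_simps sum_subtractf sum_divide_distrib power2_eq_square sum_distrib_left sum_distrib_right)
    have last: "(\<Sum>i<Suc r. u' r i * z i) = s * z r + s * \<Lambda> / (2*\<beta>)"
      unfolding u'_def \<Lambda>_def by (simp add: sum_distrib_left sum_divide_distrib mult_ac)
    have rest: "(\<Sum>l<r. (\<Sum>i<Suc r. u' l i * z i)^2) = (\<Sum>l<r. (\<Sum>i<r. u l i * z i)^2)"
      unfolding u'_def by simp
    have "(\<Sum>l<Suc r. (\<Sum>i<Suc r. u' l i * z i)^2) = quad r B' z + (s * z r + s * \<Lambda> / (2*\<beta>))^2"
      using last rest u by simp
    also have "\<dots> = quad r B z - \<Lambda>^2 / (4*\<beta>) + (s * (z r + \<Lambda> / (2*\<beta>)))^2"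
      using q1 by (simp add: algebra_simps)
    also have "\<dots> = quad r B z - \<Lambda>^2 / (4*\<beta>) + \<beta> * (z r + \<Lambda> / (2*\<beta>))^2"
      using s2 by (simp add: power_mult_distrib)
    also have "\<dots> = \<beta> * (z r)^2 + z r * \<Lambda> + quad r B z"
      using b unfolding \<beta>_def by (simp add: power2_eq_square field_simps)
    also have "\<dots> = quad (Suc r) B z"
      unfolding quad_Suc \<beta>_def \<Lambda>_def L_def by simp
    finally show "quad (Suc r) B z = (\<Sum>l<Suc r. (\<Sum>i<Suc r. u' l i * z i)^2)" by simp
  qed
qed

lemma sos_all: "sos r (quad r B)"
proof (induction r arbitrary: B)
  case 0
  show ?case unfolding sos_def quad_def by simp
next
  case (Suc r)
  note IH = Suc.IH
  show ?case
  proof (cases "B r r = 0")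
    case False
    then show ?thesis using sos_case1[OF IH] by blast
  next
    case b0: True
    show ?thesis
    proof (cases "\<forall>j<r. B r j + B j r = 0")
      case True
      obtain u where u: "\<And>z. quad r B z = (\<Sum>l<r. (\<Sum>i<r. u l i * z i)^2)"
        using IH[of B] unfolding sos_def by blast
      define u' where "u' = (\<lambda>l i. if l < r \<and> i < r then u l i else 0)"
      show ?thesis unfolding sos_def
      proof (intro exI allI)
        fix z
        have "quad (Suc r) B z = quad r B z" unfolding quad_Suc using b0 True by simp
        also have "\<dots> = (\<Sum>l<Suc r. (\<Sum>i<Suc r. u' l i * z i)^2)"
          unfolding u u'_def by simp
        finally show "quad (Suc r) B z = (\<Sum>l<Suc r. (\<Sum>i<Suc r. u' l i * z i)^2)" .
      qed
    next
      case False
      then obtain j0 where j0: "j0 < r" "B r j0 + B j0 r \<noteq> 0" by blast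
      define L where "L = B r j0 + B j0 r"
      obtain s :: complex where s1: "s * s = 1" and s2: "s * (L + s * B j0 j0) \<noteq> 0"
      proof (cases "L + B j0 j0 = 0")
        case True
        have "L \<noteq> 0" using j0 unfolding L_def by simp
        hence "(-1) * (L + (-1) * B j0 j0) \<noteq> (0::complex)"
          using True by (auto simp: algebra_simps eq_neg_iff_add_eq_0)
        then show ?thesis using that[of "-1"] by simp
      next
        case False
        then show ?thesis using that[of 1] by simp
      qed
      define M where "M = (\<lambda>i j. (if i = j then 1 else 0) + (if i = j0 \<and> j = r then s else (0::complex)))"
      define B' where "B' = (\<lambda>a b. \<Sum>i<Suc r. \<Sum>j<Suc r. B i j * M i a * M j b)"
      have Mcol: "\<And>f. (\<Sum>i<Suc r. f i * M i r) = f r + s * f j0"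
      proof -
        fix f
        have "(\<Sum>i<r. f i * M i r) = (\<Sum>i<r. if i = j0 then s * f j0 else 0)"
          by (rule sum.cong) (auto simp: M_def)
        also have "\<dots> = s * f j0" using j0 by (simp add: sum.delta)
        finally show "(\<Sum>i<Suc r. f i * M i r) = f r + s * f j0" using j0 by (simp add: M_def)
      qed
      have "B' r r = (\<Sum>i<Suc r. (\<Sum>j<Suc r. B i j * M j r) * M i r)"
        unfolding B'_def by (simp only: sum_distrib_right) (simp only: mult_ac)
      also have "\<dots> = (\<Sum>i<Suc r. (B i r + s * B i j0) * M i r)"
        by (rule sum.cong[OF refl]) (simp only: Mcol)
      also have "\<dots> = s * (L + s * B j0 j0)"
        using Mcol[of "\<lambda>i. B i r + s * B i j0"] b0 unfolding L_def by (simp only:) (simp add: algebra_simps)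
      finally have B'rr: "B' r r \<noteq> 0" using s2 by simp
      obtain u where u: "\<And>z. quad (Suc r) B' z = (\<Sum>l<Suc r. (\<Sum>i<Suc r. u l i * z i)^2)"
        using sos_case1[of r B', OF IH B'rr] unfolding sos_def by blast
      define u' where "u' = (\<lambda>l i. u l i - (if i = r then s * u l j0 else 0))"
      show ?thesis unfolding sos_def
      proof (intro exI allI)
        fix z
        define Tz where "Tz = (\<lambda>i. z i - (if i = j0 then s * z r else 0))"
        have STz: "\<forall>i<Suc r. (\<Sum>j<Suc r. M i j * Tz j) = z i"
        proof (intro allI impI)
          fix i assume i: "i < Suc r"
          have "(\<Sum>j<Suc r. M i j * Tz j) = (\<Sum>j<Suc r. (if i = j then Tz j else 0))
              + (\<Sum>j<Suc r. (if j = r then (if i = j0 then s * Tz r else 0) else 0))"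
            by (subst sum.distrib[symmetric]) (rule sum.cong, auto simp: M_def algebra_simps)
          also have "\<dots> = Tz i + (if i = j0 then s * Tz r else 0)"
            using i by (simp add: sum.delta)
          also have "\<dots> = z i" unfolding Tz_def using j0 s1 by (auto simp: algebra_simps)
          finally show "(\<Sum>j<Suc r. M i j * Tz j) = z i" .
        qed
        have qc: "quad (Suc r) B z = quad (Suc r) B (\<lambda>i. \<Sum>j<Suc r. M i j * Tz j)"
          unfolding quad_def using STz by simp
        have "quad (Suc r) B z = quad (Suc r) B' Tz"
          using quad_subst[of "Suc r" B M Tz] unfolding qc B'_def by simp
        also have "\<dots> = (\<Sum>l<Suc r. (\<Sum>i<Suc r. u l i * Tz i)^2)" by (rule u)
        also have "\<dots> = (\<Sum>l<Suc r. (\<Sum>i<Suc r. u' l i * z i)^2)"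
        proof (rule sum.cong[OF refl])
          fix l
          have "(\<Sum>i<Suc r. u l i * Tz i) = (\<Sum>i<Suc r. u l i * z i) - s * u l j0 * z r"
            unfolding Tz_def using j0 by (simp add: right_diff_distrib sum_subtractf if_distrib[where f="\<lambda>x. _ * x"] sum.delta' mult_ac)
          also have "\<dots> = (\<Sum>i<Suc r. u' l i * z i)"
            unfolding u'_def by (simp add: left_diff_distrib sum_subtractf if_distrib[where f="\<lambda>x. x * _"] sum.delta' algebra_simps)
          finally show "(\<Sum>i<Suc r. u l i * Tz i)^2 = (\<Sum>i<Suc r. u' l i * z i)^2" by simp
        qed
        finally show "quad (Suc r) B z = (\<Sum>l<Suc r. (\<Sum>i<Suc r. u' l i * z i)^2)" .
      qed
    qed
  qed
qed



definition Zs :: "nat \<Rightarrow> (nat \<Rightarrow> complex) set" where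
  "Zs m = {z. \<forall>i\<ge>m. z i = 0}"

definition linf :: "nat \<Rightarrow> ((nat \<Rightarrow> complex) \<Rightarrow> complex) \<Rightarrow> bool" where
  "linf m F \<longleftrightarrow> (\<forall>z\<in>Zs m. \<forall>z'\<in>Zs m. \<forall>a b. F (\<lambda>i. a * z i + b * z' i) = a * F z + b * F z')"

definition unitv :: "nat \<Rightarrow> nat \<Rightarrow> complex" where
  "unitv j = (\<lambda>i. if i = j then 1 else 0)"

lemma unitv_Zs: "j < m \<Longrightarrow> unitv j \<in> Zs m"
  unfolding unitv_def Zs_def by auto

lemma linf_zero: "linf m F \<Longrightarrow> F (\<lambda>_. 0) = 0"
proof -
  assume l: "linf m F"
  have z: "(\<lambda>_. 0) \<in> Zs m" unfolding Zs_def by simp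
  from l[unfolded linf_def, rule_format, OF z z, of 0 0] show ?thesis by simp
qed

lemma linf_vanish:
  assumes l: "linf m h" and u: "\<forall>j<m. h (unitv j) = 0" and z: "z \<in> Zs m"
  shows "h z = 0"
proof -
  define tr where "tr = (\<lambda>k i. if i < k then z i else (0::complex))"
  have "k \<le> m \<Longrightarrow> h (tr k) = 0" for k
  proof (induction k)
    case 0
    have "tr 0 = (\<lambda>_. 0)" unfolding tr_def by simp
    then show ?case using linf_zero[OF l] by simp
  next
    case (Suc k)
    have tk: "tr k \<in> Zs m" using Suc.prems unfolding tr_def Zs_def by auto
    have uk: "unitv k \<in> Zs m" using Suc.prems by (simp add: unitv_Zs)
    have eq: "tr (Suc k) = (\<lambda>i. 1 * tr k i + z k * unitv k i)"
      by (rule ext) (auto simp: tr_def unitv_def less_Suc_eq)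
    have "h (\<lambda>i. 1 * tr k i + z k * unitv k i) = 1 * h (tr k) + z k * h (unitv k)"
      by (rule l[unfolded linf_def, rule_format, OF tk uk])
    then have "h (tr (Suc k)) = 1 * h (tr k) + z k * h (unitv k)"
      by (simp only: eq)
    then show ?case using Suc u by simp
  qed
  moreover have "tr m = z" using z unfolding tr_def Zs_def by auto
  ultimately show ?thesis by auto
qed

lemma linf_mono: "linf m F \<Longrightarrow> m' \<le> m \<Longrightarrow> linf m' F"
  unfolding linf_def Zs_def by auto

lemma kernel_exists:
  "K < m \<Longrightarrow> (\<forall>k<K. linf m (F k)) \<Longrightarrow> \<exists>z\<in>Zs m. (\<exists>i<m. z i \<noteq> 0) \<and> (\<forall>k<K. F k z = 0)"
proof (induction K arbitrary: m F)
  case 0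
  then show ?case using unitv_Zs[of 0 m] by (intro bexI[of _ "unitv 0"]) (auto simp: unitv_def)
next
  case (Suc K)
  define h where "h = F K"
  have lh: "linf m h" using Suc.prems unfolding h_def by simp
  show ?case
  proof (cases "\<forall>j<m. h (unitv j) = 0")
    case True
    obtain z where z: "z \<in> Zs m" "\<exists>i<m. z i \<noteq> 0" "\<forall>k<K. F k z = 0"
      using Suc.IH[of m F] Suc.prems by auto
    have "F K z = 0" using linf_vanish[OF lh True z(1)] unfolding h_def .
    then show ?thesis using z by (intro bexI[of _ z]) (auto simp: less_Suc_eq)
  next
    case False
    then obtain j0 where j0: "j0 < m" "h (unitv j0) \<noteq> 0" by auto
    obtain m' where m': "m = Suc m'" using j0 by (cases m) auto
    define \<sigma> where "\<sigma> = (\<lambda>z::nat\<Rightarrow>complex. \<lambda>i. if i = j0 then 0 else if i = m' then z j0 else z i)"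
    define \<psi> where "\<psi> = (\<lambda>z. \<lambda>i. \<sigma> z i - (h (\<sigma> z) / h (unitv j0)) * unitv j0 i)"
    have \<sigma>Z: "z \<in> Zs m' \<Longrightarrow> \<sigma> z \<in> Zs m" for z
      unfolding Zs_def \<sigma>_def m' by auto
    have \<sigma>lin: "\<sigma> (\<lambda>i. a * z i + b * z' i) = (\<lambda>i. a * \<sigma> z i + b * \<sigma> z' i)" for a b z z'
      unfolding \<sigma>_def by auto
    have uj: "unitv j0 \<in> Zs m" using j0 unitv_Zs by simp
    have \<psi>Z: "z \<in> Zs m' \<Longrightarrow> \<psi> z \<in> Zs m" for z
      using \<sigma>Z[of z] uj unfolding \<psi>_def Zs_def by auto
    have \<psi>lin: "\<psi> (\<lambda>i. a * z i + b * z' i) = (\<lambda>i. a * \<psi> z i + b * \<psi> z' i)"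
      if "z \<in> Zs m'" "z' \<in> Zs m'" for a b z z'
    proof -
      have "h (\<sigma> (\<lambda>i. a * z i + b * z' i)) = a * h (\<sigma> z) + b * h (\<sigma> z')"
        unfolding \<sigma>lin using lh[unfolded linf_def, rule_format, OF \<sigma>Z[OF that(1)] \<sigma>Z[OF that(2)]] by simp
      then show ?thesis unfolding \<psi>_def \<sigma>lin by (auto simp: algebra_simps add_divide_distrib)
    qed
    define G where "G = (\<lambda>k z. F k (\<psi> z))"
    have lG: "\<forall>k<K. linf m' (G k)"
    proof (intro allI impI)
      fix k assume k: "k < K"
      have lF: "linf m (F k)" using Suc.prems k by simp
      show "linf m' (G k)" unfolding linf_def G_def
      proof (intro ballI allI)
        fix z z' a b assume z: "z \<in> Zs m'" and z': "z' \<in> Zs m'"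
        show "F k (\<psi> (\<lambda>i. a * z i + b * z' i)) = a * F k (\<psi> z) + b * F k (\<psi> z')"
          unfolding \<psi>lin[OF z z'] using lF[unfolded linf_def, rule_format, OF \<psi>Z[OF z] \<psi>Z[OF z']] .
      qed
    qed
    have "K < m'" using Suc.prems m' by simp
    then obtain z where z: "z \<in> Zs m'" "\<exists>i<m'. z i \<noteq> 0" "\<forall>k<K. G k z = 0"
      using Suc.IH[of m' G] lG by auto
    have hz: "h (\<psi> z) = 0"
    proof -
      define c where "c = - (h (\<sigma> z) / h (unitv j0))"
      have e: "\<psi> z = (\<lambda>i. 1 * \<sigma> z i + c * unitv j0 i)"
        by (rule ext) (simp add: \<psi>_def c_def)
      have "h (\<lambda>i. 1 * \<sigma> z i + c * unitv j0 i) = 1 * h (\<sigma> z) + c * h (unitv j0)"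
        by (rule lh[unfolded linf_def, rule_format, OF \<sigma>Z[OF z(1)] uj])
      then show ?thesis unfolding e c_def using j0 by simp
    qed
    have nz: "\<exists>i<m. \<psi> z i \<noteq> 0"
    proof -
      obtain i where i: "i < m'" "z i \<noteq> 0" using z by auto
      show ?thesis
      proof (cases "i = j0")
        case False
        then have "\<psi> z i = z i" unfolding \<psi>_def \<sigma>_def unitv_def using i by auto
        then show ?thesis using i m' by (intro exI[of _ i]) auto
      next
        case True
        then have "\<psi> z m' = z i" unfolding \<psi>_def \<sigma>_def unitv_def using i by auto
        then show ?thesis using i m' by (intro exI[of _ m']) auto
      qed
    qed
    show ?thesis using \<psi>Z[OF z(1)] nz z(3) hz unfolding G_def h_def
      by (intro bexI[of _ "\<psi> z"]) (auto simp: less_Suc_eq)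
  qed
qed



definition lf :: "nat \<Rightarrow> (nat \<Rightarrow> nat \<Rightarrow> complex) \<Rightarrow> nat \<Rightarrow> (nat \<Rightarrow> complex) \<Rightarrow> complex" where
  "lf n P k g = (\<Sum>i<n. g i * P i k)"

definition Wsp :: "nat \<Rightarrow> (nat \<Rightarrow> complex) set" where
  "Wsp n = {g. (\<Sum>i<n. g i) = 0}"

lemma lf_lin: "lf n P k (\<lambda>i. a * g i + b * h i) = a * lf n P k g + b * lf n P k h"
  unfolding lf_def by (simp add: sum.distrib sum_distrib_left algebra_simps)

lemma lf_diff_sum: "lf n P k (\<lambda>i. g i - (\<Sum>j<E. c j * e j i)) = lf n P k g - (\<Sum>j<E. c j * lf n P k (e j))"
proof -
  have "lf n P k (\<lambda>i. g i - (\<Sum>j<E. c j * e j i)) = lf n P k g - (\<Sum>i<n. \<Sum>j<E. c j * e j i * P i k)"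
    unfolding lf_def by (simp add: left_diff_distrib sum_subtractf sum_distrib_right)
  also have "(\<Sum>i<n. \<Sum>j<E. c j * e j i * P i k) = (\<Sum>j<E. \<Sum>i<n. c j * e j i * P i k)"
    by (rule sum.swap)
  also have "\<dots> = (\<Sum>j<E. c j * lf n P k (e j))"
    unfolding lf_def by (simp add: sum_distrib_left mult_ac)
  finally show ?thesis .
qed

lemma W_diff_sum: "g \<in> Wsp n \<Longrightarrow> (\<forall>j<E. e j \<in> Wsp n) \<Longrightarrow> (\<lambda>i. g i - (\<Sum>j<E. c j * e j i)) \<in> Wsp n"
proof -
  assume g: "g \<in> Wsp n" and e: "\<forall>j<E. e j \<in> Wsp n"
  have "(\<Sum>i<n. \<Sum>j<E. c j * e j i) = (\<Sum>j<E. \<Sum>i<n. c j * e j i)" by (rule sum.swap)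
  also have "\<dots> = (\<Sum>j<E. c j * (\<Sum>i<n. e j i))" by (simp add: sum_distrib_left)
  also have "\<dots> = 0" using e unfolding Wsp_def by simp
  finally show ?thesis using g unfolding Wsp_def by (simp add: sum_subtractf)
qed

lemma W_lin: "g \<in> Wsp n \<Longrightarrow> h \<in> Wsp n \<Longrightarrow> (\<lambda>i. a * g i + b * h i) \<in> Wsp n"
  unfolding Wsp_def by (simp add: sum.distrib sum_distrib_left[symmetric])

lemma dichotomy:
  "(\<exists>c. (\<exists>k<E. c k \<noteq> 0) \<and> (\<forall>g\<in>Wsp n. (\<Sum>k<E. c k * lf n P k g) = 0))
   \<or> (\<exists>e. (\<forall>j<E. e j \<in> Wsp n) \<and> (\<forall>k<E. \<forall>j<E. lf n P k (e j) = (if k = j then 1 else 0)))"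
proof (induction E)
  case 0
  then show ?case by simp
next
  case (Suc E)
  show ?case
  proof (cases "\<exists>c. (\<exists>k<E. c k \<noteq> 0) \<and> (\<forall>g\<in>Wsp n. (\<Sum>k<E. c k * lf n P k g) = 0)")
    case True
    then obtain c where c: "\<exists>k<E. c k \<noteq> 0" "\<forall>g\<in>Wsp n. (\<Sum>k<E. c k * lf n P k g) = 0" by blast
    define c' where "c' = (\<lambda>k. if k < E then c k else 0)"
    have "\<exists>k<Suc E. c' k \<noteq> 0" using c(1) unfolding c'_def by auto
    moreover have "\<forall>g\<in>Wsp n. (\<Sum>k<Suc E. c' k * lf n P k g) = 0" using c(2) unfolding c'_def by simp
    ultimately show ?thesis by blast
  next
    case False
    with Suc.IH obtain e' where e': "\<forall>j<E. e' j \<in> Wsp n"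
      "\<forall>k<E. \<forall>j<E. lf n P k (e' j) = (if k = j then 1 else 0)" by blast
    define ll where "ll = (\<lambda>g. lf n P E g - (\<Sum>k<E. lf n P E (e' k) * lf n P k g))"
    show ?thesis
    proof (cases "\<forall>g\<in>Wsp n. ll g = 0")
      case True
      define c where "c = (\<lambda>k. if k < E then - lf n P E (e' k) else 1)"
      have "\<forall>g\<in>Wsp n. (\<Sum>k<Suc E. c k * lf n P k g) = 0"
        using True unfolding ll_def c_def by (simp add: sum_negf)
      moreover have "c E \<noteq> 0" unfolding c_def by simp
      ultimately show ?thesis by blast
    next
      case False
      then obtain g where g: "g \<in> Wsp n" "ll g \<noteq> 0" by blast
      define h where "h = (\<lambda>i. g i - (\<Sum>k<E. lf n P k g * e' k i))"
      have hW: "h \<in> Wsp n" unfolding h_def by (rule W_diff_sum[OF g(1) e'(1)])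
      have hj: "lf n P j h = 0" if "j < E" for j
      proof -
        have "lf n P j h = lf n P j g - (\<Sum>k<E. lf n P k g * lf n P j (e' k))"
          unfolding h_def by (rule lf_diff_sum)
        also have "\<dots> = lf n P j g - (\<Sum>k<E. if k = j then lf n P k g else 0)"
          using e'(2) that by (intro arg_cong2[where f="(-)"] refl sum.cong) auto
        also have "\<dots> = 0" using that by (simp add: sum.delta')
        finally show ?thesis .
      qed
      have hE: "lf n P E h = ll g"
        unfolding h_def ll_def lf_diff_sum by (simp add: mult_ac)
      define \<gamma> where "\<gamma> = ll g"
      define eE where "eE = (\<lambda>i. h i / \<gamma>)"
      have eEW: "eE \<in> Wsp n" using hW unfolding eE_def Wsp_def by (simp add: sum_divide_distrib[symmetric])
      have eEl: "lf n P k eE = lf n P k h / \<gamma>" for k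
        unfolding eE_def lf_def by (simp add: sum_divide_distrib)
      define e where "e = (\<lambda>j. if j < E then (\<lambda>i. 1 * e' j i + (- lf n P E (e' j)) * eE i) else eE)"
      have eW: "\<forall>j<Suc E. e j \<in> Wsp n"
      proof (intro allI impI)
        fix j assume "j < Suc E"
        show "e j \<in> Wsp n"
        proof (cases "j < E")
          case True
          then show ?thesis unfolding e_def using W_lin[OF _ eEW, of "e' j" 1 "- lf n P E (e' j)"] e'(1) by (simp only: if_True)
        next
          case False
          then show ?thesis unfolding e_def using eEW by simp
        qed
      qed
      have el: "\<forall>k<Suc E. \<forall>j<Suc E. lf n P k (e j) = (if k = j then 1 else 0)"
      proof (intro allI impI)
        fix k j assume k: "k < Suc E" and j: "j < Suc E"
        have g0: "\<gamma> \<noteq> 0" using g(2) unfolding \<gamma>_def .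
        have lE: "lf n P k eE = (if k = E then 1 else 0)"
          unfolding eEl using hj[of k] k hE g0 \<gamma>_def by (auto simp: less_Suc_eq)
        show "lf n P k (e j) = (if k = j then 1 else 0)"
        proof (cases "j < E")
          case True
          have "lf n P k (e j) = 1 * lf n P k (e' j) + (- lf n P E (e' j)) * lf n P k eE"
            unfolding e_def using True by (simp only: if_True lf_lin)
          then show ?thesis using lE e'(2) True k by (auto simp: less_Suc_eq)
        next
          case False
          then show ?thesis unfolding e_def using lE j by auto
        qed
      qed
      show ?thesis using eW el by blast
    qed
  qed
qed



definition zz :: "nat \<Rightarrow> ((nat \<times> nat) \<Rightarrow> complex) \<Rightarrow> nat \<Rightarrow> nat \<Rightarrow> complex" where
  "zz n x i j = (if i < j then x (i, j) else if j < i then x (j, i) else 0)"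

definition Bf :: "nat \<Rightarrow> ((nat \<times> nat) \<Rightarrow> complex) \<Rightarrow> (nat \<Rightarrow> complex) \<Rightarrow> (nat \<Rightarrow> complex) \<Rightarrow> complex" where
  "Bf n x g h = - (1/2) * (\<Sum>i<n. \<Sum>j<n. zz n x i j * g i * h j)"

lemma sq_diff_form:
  fixes a g h :: "nat \<Rightarrow> complex"
  assumes "(\<Sum>i<n. g i) = 0" "(\<Sum>i<n. h i) = 0"
  shows "(\<Sum>i<n. \<Sum>j<n. (a i - a j)^2 * g i * h j) = - 2 * ((\<Sum>i<n. g i * a i) * (\<Sum>j<n. h j * a j))"
proof -
  have e: "(a i - a j)^2 * g i * h j = (a i ^2 * g i) * h j + g i * (a j ^2 * h j) - 2 * ((g i * a i) * (h j * a j))" for i j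
    by (simp add: power2_eq_square algebra_simps)
  have "(\<Sum>i<n. \<Sum>j<n. (a i - a j)^2 * g i * h j)
      = (\<Sum>i<n. a i ^2 * g i) * (\<Sum>j<n. h j) + (\<Sum>i<n. g i) * (\<Sum>j<n. a j ^2 * h j)
        - 2 * ((\<Sum>i<n. g i * a i) * (\<Sum>j<n. h j * a j))"
  proof -
    have p1: "(\<Sum>i<n. a i ^2 * g i) * (\<Sum>j<n. h j) = (\<Sum>i<n. \<Sum>j<n. (a i ^2 * g i) * h j)"
      by (rule sum_product)
    have p2: "(\<Sum>i<n. g i) * (\<Sum>j<n. a j ^2 * h j) = (\<Sum>i<n. \<Sum>j<n. g i * (a j ^2 * h j))"
      by (rule sum_product)
    have p3: "(\<Sum>i<n. g i * a i) * (\<Sum>j<n. h j * a j) = (\<Sum>i<n. \<Sum>j<n. (g i * a i) * (h j * a j))"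
      by (rule sum_product)
    have "(\<Sum>i<n. \<Sum>j<n. (a i - a j)^2 * g i * h j) = (\<Sum>i<n. \<Sum>j<n. (a i ^2 * g i) * h j)
       + (\<Sum>i<n. \<Sum>j<n. g i * (a j ^2 * h j)) - 2 * (\<Sum>i<n. \<Sum>j<n. (g i * a i) * (h j * a j))"
      by (simp add: e sum.distrib sum_subtractf sum_distrib_left)
    then show ?thesis by (simp only: p1 p2 p3)
  qed
  then show ?thesis using assms by simp
qed

lemma zz_mmap: "i < n \<Longrightarrow> j < n \<Longrightarrow> zz n (mmap E n q) i j = (\<Sum>k<E. (q i k - q j k)^2)"
  unfolding zz_def mmap_def edges_def by (auto simp: power2_commute)

lemma Bf_mmap:
  assumes "g \<in> Wsp n" "h \<in> Wsp n"
  shows "Bf n (mmap E n q) g h = (\<Sum>k<E. lf n q k g * lf n q k h)"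
proof -
  have "(\<Sum>i<n. \<Sum>j<n. zz n (mmap E n q) i j * g i * h j) = (\<Sum>i<n. \<Sum>j<n. \<Sum>k<E. (q i k - q j k)^2 * g i * h j)"
    by (simp add: zz_mmap sum_distrib_right)
  also have "\<dots> = (\<Sum>k<E. \<Sum>i<n. \<Sum>j<n. (q i k - q j k)^2 * g i * h j)"
    by (simp add: sum.swap[of _ "{..<E}"])
  also have "\<dots> = (\<Sum>k<E. - 2 * (lf n q k g * lf n q k h))"
    using assms unfolding Wsp_def lf_def by (simp add: sq_diff_form)
  also have "\<dots> = - 2 * (\<Sum>k<E. lf n q k g * lf n q k h)"
    by (simp add: sum_distrib_left)
  finally show ?thesis unfolding Bf_def by simp
qed

lemma Bf_add: "Bf n (\<lambda>e. x e + t * y e) g h = Bf n x g h + t * Bf n y g h"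
proof -
  have "zz n (\<lambda>e. x e + t * y e) i j = zz n x i j + t * zz n y i j" for i j
    unfolding zz_def by auto
  then show ?thesis unfolding Bf_def
    by (simp add: distrib_right sum.distrib sum_distrib_left algebra_simps)
qed

lemma Bf_zero: "Bf n (\<lambda>_. 0) g h = 0"
proof -
  have "zz n (\<lambda>_. 0) i j = 0" for i j unfolding zz_def by auto
  then show ?thesis unfolding Bf_def by simp
qed

lemma Bf_plus: "Bf n (\<lambda>e. x e + y e) g h = Bf n x g h + Bf n y g h"
  using Bf_add[of n x 1 y g h] by simp

lemma Bf_scale: "Bf n (\<lambda>e. c * y e) g h = c * Bf n y g h"
  using Bf_add[of n "\<lambda>_. 0" c y g h] by (simp add: Bf_zero)

lemma Bf_lin1: "Bf n y (\<lambda>i. \<Sum>j<K. a j * v j i) h = (\<Sum>j<K. a j * Bf n y (v j) h)"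
proof -
  have "(\<Sum>i<n. \<Sum>l<n. zz n y i l * (\<Sum>j<K. a j * v j i) * h l) = (\<Sum>i<n. \<Sum>l<n. \<Sum>j<K. a j * (zz n y i l * v j i * h l))"
    by (simp add: sum_distrib_left sum_distrib_right mult_ac)
  also have "\<dots> = (\<Sum>j<K. a j * (\<Sum>i<n. \<Sum>l<n. zz n y i l * v j i * h l))"
    by (simp add: sum.swap[of _ "{..<K}"] sum_distrib_left)
  finally show ?thesis unfolding Bf_def by (simp add: sum_distrib_left mult_ac)
qed

lemma lf_lin_sum: "lf n P k (\<lambda>i. \<Sum>j<K. a j * v j i) = (\<Sum>j<K. a j * lf n P k (v j))"
proof -
  have "lf n P k (\<lambda>i. \<Sum>j<K. a j * v j i) = (\<Sum>i<n. \<Sum>j<K. a j * (v j i * P i k))"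
    unfolding lf_def by (simp add: sum_distrib_right sum_distrib_left mult_ac)
  also have "\<dots> = (\<Sum>j<K. a j * lf n P k (v j))"
    unfolding lf_def by (simp add: sum.swap[of _ "{..<K}"] sum_distrib_left)
  finally show ?thesis .
qed

lemma W_sum: "(\<forall>j<K. v j \<in> Wsp n) \<Longrightarrow> (\<lambda>i. \<Sum>j<K. a j * v j i) \<in> Wsp n"
proof -
  assume v: "\<forall>j<K. v j \<in> Wsp n"
  have "(\<Sum>i<n. \<Sum>j<K. a j * v j i) = (\<Sum>j<K. a j * (\<Sum>i<n. v j i))"
    by (simp add: sum.swap[of _ "{..<K}"] sum_distrib_left)
  also have "\<dots> = 0" using v unfolding Wsp_def by simp
  finally show ?thesis unfolding Wsp_def by simp
qed



lemma eps_arg: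
  fixes H :: "nat \<Rightarrow> nat \<Rightarrow> complex" and r :: "nat \<Rightarrow> complex" and \<gamma> :: complex
  assumes A: "\<And>t::real. t > 0 \<Longrightarrow> \<exists>a. (\<exists>j<Suc E. a j \<noteq> 0)
      \<and> (\<forall>i<E. a i = - of_real t * (\<Sum>j<Suc E. a j * H j i))
      \<and> (\<Sum>j<E. a j * r j) + a E * \<gamma> = 0"
  shows "\<gamma> = 0"
proof (rule ccontr)
  assume g0: "\<gamma> \<noteq> 0"
  define M where "M = 1 + norm \<gamma> + (\<Sum>i<E. \<Sum>j<Suc E. norm (H j i)) + (\<Sum>j<E. norm (r j))"
  have sH: "(\<Sum>i<E. \<Sum>j<Suc E. norm (H j i)) \<ge> 0" by (intro sum_nonneg) auto
  have sr: "(\<Sum>j<E. norm (r j)) \<ge> 0" by (intro sum_nonneg) auto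
  have M1: "M \<ge> 1" unfolding M_def using sH sr by simp
  have Mg: "M \<ge> norm \<gamma>" unfolding M_def using sH sr by simp
  define t where "t = norm \<gamma> / (4 * M^2)"
  have gpos: "norm \<gamma> > 0" using g0 by simp
  have tpos: "t > 0" unfolding t_def using gpos M1 by simp
  obtain a where a1: "\<exists>j<Suc E. a j \<noteq> 0"
    and a2: "\<forall>i<E. a i = - of_real t * (\<Sum>j<Suc E. a j * H j i)"
    and a3: "(\<Sum>j<E. a j * r j) + a E * \<gamma> = 0"
    using A[OF tpos] by blast
  define S where "S = (\<Sum>i<E. norm (a i))"
  define T where "T = S + norm (a E)"
  have S0: "S \<ge> 0" unfolding S_def by (intro sum_nonneg) auto
  have aT: "norm (a j) \<le> T" if "j < Suc E" for j
  proof (cases "j < E")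
    case True
    have "norm (a j) \<le> S" unfolding S_def
      using member_le_sum[of j "{..<E}" "\<lambda>i. norm (a i)"] True by simp
    then show ?thesis unfolding T_def using norm_ge_zero[of "a E"] by linarith
  next
    case False
    then have "j = E" using that by simp
    then show ?thesis unfolding T_def using S0 by simp
  qed
  have ai: "norm (a i) \<le> t * (T * (\<Sum>j<Suc E. norm (H j i)))" if "i < E" for i
  proof -
    have "norm (a i) = t * norm (\<Sum>j<Suc E. a j * H j i)"
      using a2 that tpos by (simp add: norm_mult)
    also have "norm (\<Sum>j<Suc E. a j * H j i) \<le> (\<Sum>j<Suc E. norm (a j) * norm (H j i))"
      by (rule order_trans[OF norm_sum]) (simp add: norm_mult)
    also have "\<dots> \<le> (\<Sum>j<Suc E. T * norm (H j i))"
      by (intro sum_mono mult_right_mono aT) auto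
    also have "\<dots> = T * (\<Sum>j<Suc E. norm (H j i))"
      by (rule sum_distrib_left[symmetric])
    finally show ?thesis using tpos by (simp add: mult_left_mono)
  qed
  have "S \<le> (\<Sum>i<E. t * (T * (\<Sum>j<Suc E. norm (H j i))))"
    unfolding S_def by (intro sum_mono ai) simp
  also have "\<dots> = t * T * (\<Sum>i<E. \<Sum>j<Suc E. norm (H j i))"
    by (simp add: sum_distrib_left mult_ac)
  also have "\<dots> \<le> t * T * M"
    unfolding M_def using tpos S0 sr by (intro mult_left_mono) (auto simp: T_def)
  finally have S1: "S \<le> t * M * T" by (simp add: mult_ac)
  have "norm (a E) * norm \<gamma> = norm (\<Sum>j<E. a j * r j)"
    using a3 by (simp add: norm_mult eq_neg_iff_add_eq_0[symmetric] )
  also have "\<dots> \<le> (\<Sum>j<E. norm (a j) * norm (r j))"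
    by (rule order_trans[OF norm_sum]) (simp add: norm_mult)
  also have "\<dots> \<le> (\<Sum>j<E. S * norm (r j))"
    unfolding S_def by (intro sum_mono mult_right_mono member_le_sum) auto
  also have "\<dots> \<le> S * M"
    unfolding M_def using S0 sH by (simp add: sum_distrib_left[symmetric] mult_left_mono)
  finally have S2: "norm (a E) * norm \<gamma> \<le> S * M" .
  have tM: "t * M = norm \<gamma> / (4 * M)" unfolding t_def using M1 by (simp add: power2_eq_square)
  have tM4: "t * M \<le> 1/4" unfolding tM using Mg M1 by (simp add: field_simps)
  have T0: "T \<ge> 0" unfolding T_def using S0 by simp
  have "S \<le> T / 4" using S1 mult_right_mono[OF tM4 T0] by simp
  hence c1: "3 * S \<le> norm (a E)" unfolding T_def by simp
  have M0: "M \<ge> 0" using M1 by simp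
  have "norm (a E) * norm \<gamma> \<le> M * (t * M * T)"
    using S2 mult_right_mono[OF S1 M0] by (simp add: mult_ac)
  also have "\<dots> = norm \<gamma> * T / 4" unfolding tM using M1 by (simp add: field_simps)
  finally have "norm (a E) * norm \<gamma> \<le> norm \<gamma> * T / 4" .
  hence "norm (a E) \<le> T / 4" using gpos by (simp add: field_simps mult.commute)
  hence c2: "3 * norm (a E) \<le> S" unfolding T_def by simp
  have aE0: "norm (a E) = 0" using c1 c2 S0 norm_ge_zero[of "a E"] by linarith
  have "S = 0" using c1 c2 S0 norm_ge_zero[of "a E"] by linarith
  hence "\<forall>i<E. a i = 0" unfolding S_def by (simp add: sum_nonneg_eq_0_iff)
  then show False using a1 aE0 by (auto simp: less_Suc_eq)
qed



inductive_set cspn :: "((nat \<times> nat) \<Rightarrow> complex) set \<Rightarrow> ((nat \<times> nat) \<Rightarrow> complex) set" for S where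
  cz: "(\<lambda>_. 0) \<in> cspn S"
| cb: "y \<in> S \<Longrightarrow> y \<in> cspn S"
| cp: "u \<in> cspn S \<Longrightarrow> v \<in> cspn S \<Longrightarrow> (\<lambda>e. u e + v e) \<in> cspn S"
| cs: "u \<in> cspn S \<Longrightarrow> (\<lambda>e. c * u e) \<in> cspn S"

definition Cset :: "nat \<Rightarrow> nat \<Rightarrow> ((nat \<times> nat) \<Rightarrow> complex) \<Rightarrow> ((nat \<times> nat) \<Rightarrow> complex) set" where
  "Cset E n x = {y. \<forall>t. (\<lambda>e. x e + t * y e) \<in> Mvar E n}"

lemma cspn_mono: "S \<subseteq> T \<Longrightarrow> cspn S \<subseteq> cspn T"
proof
  fix u assume st: "S \<subseteq> T" and u: "u \<in> cspn S"
  from u show "u \<in> cspn T" by (induction rule: cspn.induct) (use st in \<open>auto intro: cspn.intros\<close>)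
qed

lemma cspn_sum: "finite F \<Longrightarrow> (\<forall>f\<in>F. u f \<in> cspn S) \<Longrightarrow> (\<lambda>e. \<Sum>f\<in>F. c f * u f e) \<in> cspn S"
proof (induction F rule: finite_induct)
  case empty
  then show ?case using cspn.cz by simp
next
  case (insert x F)
  have "(\<lambda>e. c x * u x e) \<in> cspn S" using insert by (auto intro: cspn.cs)
  moreover have "(\<lambda>e. \<Sum>f\<in>F. c f * u f e) \<in> cspn S" using insert by auto
  ultimately have "(\<lambda>e. c x * u x e + (\<Sum>f\<in>F. c f * u f e)) \<in> cspn S" by (rule cspn.cp)
  then show ?case using insert by simp
qed

lemma cvecs_add: "u \<in> cvecs n \<Longrightarrow> v \<in> cvecs n \<Longrightarrow> (\<lambda>e. u e + v e) \<in> cvecs n"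
  unfolding cvecs_def by auto

lemma cvecs_scale: "u \<in> cvecs n \<Longrightarrow> (\<lambda>e. c * u e) \<in> cvecs n"
  unfolding cvecs_def by auto

lemma cspn_sub: "S \<subseteq> cvecs n \<Longrightarrow> cspn S \<subseteq> cvecs n"
proof
  fix u assume st: "S \<subseteq> cvecs n" and u: "u \<in> cspn S"
  from u show "u \<in> cvecs n"
    by (induction rule: cspn.induct) (use st in \<open>auto simp: cvecs_def\<close>)
qed

lemma matvec_add: "matvec n A (\<lambda>e. u e + v e) = (\<lambda>e. matvec n A u e + matvec n A v e)"
  unfolding matvec_def by (auto simp: distrib_left sum.distrib)

lemma matvec_scale: "matvec n A (\<lambda>e. c * u e) = (\<lambda>e. c * matvec n A u e)"
  unfolding matvec_def by (auto simp: sum_distrib_left mult_ac)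

lemma matvec_zero: "matvec n A (\<lambda>_. 0) = (\<lambda>_. 0)"
  unfolding matvec_def by auto

lemma matvec_cvecs: "matvec n A v \<in> cvecs n"
  unfolding matvec_def cvecs_def by auto

lemma cspn_image: "cspn (matvec n A ` S) \<subseteq> matvec n A ` cspn S"
proof
  fix u assume "u \<in> cspn (matvec n A ` S)"
  then show "u \<in> matvec n A ` cspn S"
  proof (induction rule: cspn.induct)
    case cz
    show ?case using cspn.cz[of S] by (intro image_eqI[where x="\<lambda>_. 0"]) (simp_all add: matvec_zero)
  next
    case (cb y)
    then show ?case by (auto intro: cspn.cb)
  next
    case (cp u v)
    then obtain u' v' where "u' \<in> cspn S" "v' \<in> cspn S" "u = matvec n A u'" "v = matvec n A v'" by auto
    then show ?case
      by (intro image_eqI[of _ _ "\<lambda>e. u' e + v' e"]) (auto simp: matvec_add intro: cspn.cp)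
  next
    case (cs u c)
    then obtain u' where "u' \<in> cspn S" "u = matvec n A u'" by auto
    then show ?case
      by (intro image_eqI[of _ _ "\<lambda>e. c * u' e"]) (auto simp: matvec_scale intro: cspn.cs)
  qed
qed

lemma image_cspn: "matvec n A ` cspn S \<subseteq> cspn (matvec n A ` S)"
proof
  fix u assume "u \<in> matvec n A ` cspn S"
  then obtain u' where u': "u' \<in> cspn S" "u = matvec n A u'" by auto
  have "matvec n A u' \<in> cspn (matvec n A ` S)" using u'(1)
  proof (induction rule: cspn.induct)
    case cz
    then show ?case using matvec_zero[of n A] cspn.cz by simp
  next
    case (cb y)
    then show ?case by (auto intro: cspn.cb)
  next
    case (cp u v)
    then show ?case using matvec_add[of n A u v] cspn.cp by simp
  next
    case (cs u c)
    then show ?case using matvec_scale[of n A c u] cspn.cs by simp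
  qed
  then show "u \<in> cspn (matvec n A ` S)" using u' by simp
qed

lemma mmap_cvecs: "mmap d n p \<in> cvecs n"
  unfolding mmap_def cvecs_def by auto

lemma Mvar_cvecs: "Mvar d n \<subseteq> cvecs n"
  unfolding Mvar_def using mmap_cvecs by auto

lemma Mvar_mono: "D \<le> E \<Longrightarrow> Mvar D n \<subseteq> Mvar E n"
proof
  fix x assume DE: "D \<le> E" and "x \<in> Mvar D n"
  then obtain p where x: "x = mmap D n p" unfolding Mvar_def by auto
  define p' where "p' = (\<lambda>i k. if k < D then p i k else 0)"
  have "mmap E n p' = mmap D n p"
  proof
    fix e :: "nat \<times> nat"
    obtain i j where e: "e = (i, j)" by (cases e)
    have "(\<Sum>k<E. (p' i k - p' j k)^2) = (\<Sum>k<D. (p' i k - p' j k)^2)"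
      using DE by (intro sum.mono_neutral_right) (auto simp: p'_def)
    also have "\<dots> = (\<Sum>k<D. (p i k - p j k)^2)" by (simp add: p'_def)
    finally show "mmap E n p' e = mmap D n p e" unfolding e mmap_def by simp
  qed
  then show "x \<in> Mvar E n" unfolding x Mvar_def using rangeI[of "mmap E n" p'] by simp
qed

lemma finite_edges: "finite (edges n)"
proof -
  have "edges n \<subseteq> {..<n} \<times> {..<n}" unfolding edges_def by auto
  then show ?thesis by (rule finite_subset) simp
qed

definition ev :: "nat \<times> nat \<Rightarrow> (nat \<times> nat) \<Rightarrow> complex" where
  "ev f = (\<lambda>e. if e = f then 1 else 0)"

lemma ev_cvecs: "f \<in> edges n \<Longrightarrow> ev f \<in> cvecs n"
  unfolding ev_def cvecs_def by auto

lemma ev_span: assumes f: "f \<in> edges n" shows "ev f \<in> cspn (Mvar 1 n)"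
proof -
  obtain i j where fij: "f = (i, j)" by (cases f)
  have ij: "i < j" "j < n" using f fij unfolding edges_def by auto
  define ind :: "nat set \<Rightarrow> nat \<Rightarrow> nat \<Rightarrow> complex" where "ind = (\<lambda>S a k. if a \<in> S then 1 else 0)"
  define m1 where "m1 = mmap 1 n (ind {i})"
  define m2 where "m2 = mmap 1 n (ind {j})"
  define m3 where "m3 = mmap 1 n (ind {i, j})"
  have "ev f = (\<lambda>e. (\<lambda>e. (\<lambda>e. (1/2) * m1 e) e + (\<lambda>e. (1/2) * m2 e) e) e + (\<lambda>e. (-1/2) * m3 e) e)"
  proof
    fix e :: "nat \<times> nat"
    obtain a b where e: "e = (a, b)" by (cases e)
    show "ev f e = (\<lambda>e. (\<lambda>e. (\<lambda>e. (1/2) * m1 e) e + (\<lambda>e. (1/2) * m2 e) e) e + (\<lambda>e. (-1/2) * m3 e) e) e"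
      unfolding e m1_def m2_def m3_def mmap_def ev_def fij ind_def edges_def using ij
      by (auto simp: power2_eq_square)
  qed
  moreover have "m1 \<in> Mvar 1 n" "m2 \<in> Mvar 1 n" "m3 \<in> Mvar 1 n"
    unfolding m1_def m2_def m3_def Mvar_def by auto
  ultimately show ?thesis
    by (simp only:) (rule cspn.cp[OF cspn.cp[OF cspn.cs[OF cspn.cb] cspn.cs[OF cspn.cb]] cspn.cs[OF cspn.cb]])
qed

lemma span_M1: "cvecs n \<subseteq> cspn (Mvar 1 n)"
proof
  fix v assume v: "v \<in> cvecs n"
  have "v = (\<lambda>e. \<Sum>f\<in>edges n. v f * ev f e)"
  proof
    fix e
    show "v e = (\<Sum>f\<in>edges n. v f * ev f e)"
    proof (cases "e \<in> edges n")
      case True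
      have "(\<Sum>f\<in>edges n. v f * ev f e) = (\<Sum>f\<in>edges n. if f = e then v e else 0)"
        by (rule sum.cong) (auto simp: ev_def)
      also have "\<dots> = v e" using True finite_edges by simp
      finally show ?thesis by simp
    next
      case False
      have "(\<Sum>f\<in>edges n. v f * ev f e) = 0"
        by (rule sum.neutral) (use False in \<open>auto simp: ev_def\<close>)
      moreover have "v e = 0" using False v unfolding cvecs_def by blast
      ultimately show ?thesis by simp
    qed
  qed
  also have "\<dots> \<in> cspn (Mvar 1 n)"
    using finite_edges ev_span by (intro cspn_sum) auto
  finally show "v \<in> cspn (Mvar 1 n)" .
qed

lemma easy_dir:
  assumes E: "E \<ge> 1" and x: "x \<in> Mvar (E - 1) n"
  shows "Mvar 1 n \<subseteq> Cset E n x"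
proof
  fix y assume "y \<in> Mvar 1 n"
  then obtain q where y: "y = mmap 1 n q" unfolding Mvar_def by auto
  obtain p where xp: "x = mmap (E - 1) n p" using x unfolding Mvar_def by auto
  obtain r where Er: "E = Suc r" using E by (cases E) auto
  show "y \<in> Cset E n x" unfolding Cset_def
  proof (intro CollectI allI)
    fix t
    define p' where "p' = (\<lambda>i k. if k < r then p i k else csqrt t * q i 0)"
    have "mmap E n p' = (\<lambda>e. x e + t * y e)"
    proof
      fix e :: "nat \<times> nat"
      obtain i j where e: "e = (i, j)" by (cases e)
      have "(\<Sum>k<E. (p' i k - p' j k)^2) = (\<Sum>k<r. (p i k - p j k)^2) + (csqrt t * q i 0 - csqrt t * q j 0)^2"
        unfolding Er by (simp add: p'_def)
      also have "(csqrt t * q i 0 - csqrt t * q j 0)^2 = t * (q i 0 - q j 0)^2"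
      proof -
        have "csqrt t * q i 0 - csqrt t * q j 0 = csqrt t * (q i 0 - q j 0)" by (simp add: algebra_simps)
        then show ?thesis by (simp only: power_mult_distrib power2_csqrt)
      qed
      finally show "mmap E n p' e = x e + t * y e"
        unfolding e xp y mmap_def Er by simp
    qed
    then show "(\<lambda>e. x e + t * y e) \<in> Mvar E n" unfolding Mvar_def using rangeI[of "mmap E n" p'] by simp
  qed
qed



lemma quad_I_bb:
  "quad r (\<lambda>a a'. (if a = a' then 1 else 0) + b a * b a') d = (\<Sum>k<r. (d k)^2) + (\<Sum>k<r. b k * d k)^2"
proof -
  have "quad r (\<lambda>a a'. (if a = a' then 1 else 0) + b a * b a') d
      = (\<Sum>a<r. \<Sum>a'<r. (if a = a' then d a * d a' else 0)) + (\<Sum>a<r. \<Sum>a'<r. (b a * d a) * (b a' * d a'))"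
  proof -
    have t: "\<And>a a'. ((if a = a' then 1 else 0) + b a * b a') * d a * d a'
        = (if a = a' then d a * d a' else 0) + (b a * d a) * (b a' * d a')"
      by (simp add: algebra_simps)
    show ?thesis unfolding quad_def t sum.distrib by (rule refl)
  qed
  also have "(\<Sum>a<r. \<Sum>a'<r. (if a = a' then d a * d a' else 0)) = (\<Sum>k<r. (d k)^2)"
    by (simp add: power2_eq_square)
  also have "(\<Sum>a<r. \<Sum>a'<r. (b a * d a) * (b a' * d a')) = (\<Sum>k<r. b k * d k)^2"
    by (simp add: power2_eq_square sum_product)
  finally show ?thesis .
qed

lemma rel_last:
  assumes c: "c r \<noteq> 0" and rel: "\<forall>g\<in>Wsp n. (\<Sum>k<Suc r. c k * lf n p k g) = 0"
  shows "mmap (Suc r) n p \<in> Mvar r n"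
proof -
  define b where "b = (\<lambda>k. - c k / c r)"
  define B where "B = (\<lambda>a a'. (if a = a' then 1 else 0) + b a * b a')"
  obtain u where u: "\<And>z. quad r B z = (\<Sum>l<r. (\<Sum>a<r. u l a * z a)^2)"
    using sos_all[of r B] unfolding sos_def by blast
  define p'' where "p'' = (\<lambda>i l. \<Sum>a<r. u l a * p i a)"
  have "mmap (Suc r) n p = mmap r n p''"
  proof
    fix e :: "nat \<times> nat"
    obtain i j where e: "e = (i, j)" by (cases e)
    show "mmap (Suc r) n p e = mmap r n p'' e"
    proof (cases "(i, j) \<in> edges n")
      case False
      then show ?thesis unfolding e mmap_def by simp
    next
      case True
      then have ij: "i < n" "j < n" "i \<noteq> j" unfolding edges_def by auto
      define g where "g = (\<lambda>a. (if a = i then 1 else 0) - (if a = j then 1 else (0::complex)))"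
      have gW: "g \<in> Wsp n" unfolding Wsp_def g_def using ij by (simp add: sum_subtractf)
      define d where "d = (\<lambda>k. p i k - p j k)"
      have lfg: "lf n p k g = d k" for k
        unfolding lf_def g_def d_def using ij by (simp add: left_diff_distrib sum_subtractf if_distrib[where f="\<lambda>x. x * _"] cong: if_cong)
      have "(\<Sum>k<Suc r. c k * lf n p k g) = 0" using rel gW by blast
      then have "(\<Sum>k<Suc r. c k * d k) = 0" by (simp only: lfg)
      then have "c r * d r = - (\<Sum>k<r. c k * d k)" by (simp add: eq_neg_iff_add_eq_0 add.commute)
      then have dr: "d r = (\<Sum>k<r. b k * d k)" using c unfolding b_def
        by (simp add: sum_divide_distrib[symmetric] field_simps sum_negf)
      have "(\<Sum>k<Suc r. (p i k - p j k)^2) = (\<Sum>k<r. (d k)^2) + (\<Sum>k<r. b k * d k)^2"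
        using dr by (simp add: d_def)
      also have "\<dots> = quad r B d" unfolding B_def quad_I_bb ..
      also have "\<dots> = (\<Sum>l<r. (\<Sum>a<r. u l a * d a)^2)" by (rule u)
      also have "\<dots> = (\<Sum>l<r. (p'' i l - p'' j l)^2)"
        unfolding p''_def d_def by (simp add: right_diff_distrib sum_subtractf)
      finally show ?thesis unfolding e mmap_def using True by simp
    qed
  qed
  then show ?thesis unfolding Mvar_def using rangeI[of "mmap r n" p''] by simp
qed

definition sw :: "nat \<Rightarrow> nat \<Rightarrow> nat \<Rightarrow> nat" where
  "sw a b k = (if k = a then b else if k = b then a else k)"

lemma sw_sum: "a < E \<Longrightarrow> b < E \<Longrightarrow> (\<Sum>k<E. f (sw a b k)) = (\<Sum>k<E. (f k :: complex))"
  by (rule sum.reindex_bij_witness[of _ "sw a b" "sw a b"]) (auto simp: sw_def)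

lemma rel_case:
  assumes E: "E = Suc r" and k0: "k0 < E" "c k0 \<noteq> 0"
    and rel: "\<forall>g\<in>Wsp n. (\<Sum>k<E. c k * lf n p k g) = 0"
  shows "mmap E n p \<in> Mvar r n"
proof -
  define p' where "p' = (\<lambda>i k. p i (sw k0 r k))"
  define c' where "c' = (\<lambda>k. c (sw k0 r k))"
  have rE: "r < E" using E by simp
  have "c' r \<noteq> 0" unfolding c'_def sw_def using k0 by auto
  moreover have "\<forall>g\<in>Wsp n. (\<Sum>k<Suc r. c' k * lf n p' k g) = 0"
  proof
    fix g assume g: "g \<in> Wsp n"
    have "(\<Sum>k<E. c' k * lf n p' k g) = (\<Sum>k<E. c k * lf n p k g)"
      unfolding c'_def p'_def lf_def using sw_sum[OF k0(1) rE, of "\<lambda>k. c k * (\<Sum>i<n. g i * p i k)"] by simp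
    then show "(\<Sum>k<Suc r. c' k * lf n p' k g) = 0" using rel g E by simp
  qed
  ultimately have "mmap (Suc r) n p' \<in> Mvar r n" by (rule rel_last)
  moreover have "mmap (Suc r) n p' = mmap E n p"
  proof
    fix e :: "nat \<times> nat"
    obtain i j where e: "e = (i, j)" by (cases e)
    have "(\<Sum>k<E. (p' i k - p' j k)^2) = (\<Sum>k<E. (p i k - p j k)^2)"
      unfolding p'_def using sw_sum[OF k0(1) rE, of "\<lambda>k. (p i k - p j k)^2"] by simp
    then show "mmap (Suc r) n p' e = mmap E n p e" unfolding e mmap_def E by simp
  qed
  ultimately show ?thesis by simp
qed



lemma Bf_ev:
  assumes "i1 < j1" "j1 < n"
  shows "Bf n (ev (i1, j1)) w w = - (w i1 * w j1)"
proof -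
  have zz: "zz n (ev (i1, j1)) a b = (if a = i1 \<and> b = j1 then 1 else 0) + (if a = j1 \<and> b = i1 then 1 else 0)" for a b
    unfolding zz_def ev_def using assms by auto
  have inner: "(\<Sum>b<n. zz n (ev (i1, j1)) a b * w a * w b)
      = (if a = i1 then w a * w j1 else 0) + (if a = j1 then w a * w i1 else 0)" for a
  proof -
    have "(\<Sum>b<n. zz n (ev (i1, j1)) a b * w a * w b)
        = (\<Sum>b<n. (if b = j1 then (if a = i1 then w a * w j1 else 0) else 0))
          + (\<Sum>b<n. (if b = i1 then (if a = j1 then w a * w i1 else 0) else 0))"
      unfolding zz by (subst sum.distrib[symmetric]) (rule sum.cong, auto)
    also have "\<dots> = (if a = i1 then w a * w j1 else 0) + (if a = j1 then w a * w i1 else 0)"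
      using assms by simp
    finally show ?thesis .
  qed
  have "(\<Sum>a<n. \<Sum>b<n. zz n (ev (i1, j1)) a b * w a * w b) = w i1 * w j1 + w j1 * w i1"
    unfolding inner sum.distrib using assms by simp
  then show ?thesis unfolding Bf_def by (simp add: mult_ac)
qed

lemma Bf_kill:
  assumes "\<forall>y\<in>S. Bf n y w w = 0"
  shows "\<forall>y\<in>cspn S. Bf n y w w = 0"
proof
  fix y assume "y \<in> cspn S"
  then show "Bf n y w w = 0"
    by (induction rule: cspn.induct) (use assms in \<open>auto simp: Bf_zero Bf_plus Bf_scale\<close>)
qed

lemma hard_dir:
  assumes E: "E \<ge> 1" and nE: "n \<ge> E + 2" and x: "x = mmap E n p"
    and span: "cvecs n \<subseteq> cspn (Cset E n x)"
  shows "x \<in> Mvar (E - 1) n"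
proof -
  obtain r where Er: "E = Suc r" using E by (cases E) auto
  from dichotomy[of E n p] show ?thesis
  proof
    assume "\<exists>c. (\<exists>k<E. c k \<noteq> 0) \<and> (\<forall>g\<in>Wsp n. (\<Sum>k<E. c k * lf n p k g) = 0)"
    then obtain c k0 where "k0 < E" "c k0 \<noteq> 0" "\<forall>g\<in>Wsp n. (\<Sum>k<E. c k * lf n p k g) = 0" by blast
    then have "mmap E n p \<in> Mvar r n" using rel_case[OF Er] by blast
    then show ?thesis using x Er by simp
  next
    assume "\<exists>e. (\<forall>j<E. e j \<in> Wsp n) \<and> (\<forall>k<E. \<forall>j<E. lf n p k (e j) = (if k = j then 1 else 0))"
    then obtain e where eW: "\<forall>j<E. e j \<in> Wsp n"
      and el: "\<forall>k<E. \<forall>j<E. lf n p k (e j) = (if k = j then 1 else 0)" by blast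
    define F where "F = (\<lambda>k (g::nat\<Rightarrow>complex). if k = 0 then (\<Sum>i<n. g i) else lf n p (k - 1) g)"
    have lF: "\<forall>k<Suc E. linf n (F k)"
      unfolding linf_def F_def by (auto simp: lf_lin sum.distrib sum_distrib_left)
    obtain w where wZ: "w \<in> Zs n" and wnz: "\<exists>i<n. w i \<noteq> 0" and wF: "\<forall>k<Suc E. F k w = 0"
      using kernel_exists[of "Suc E" n F] lF nE by auto
    have wW: "w \<in> Wsp n" using wF unfolding F_def Wsp_def by auto
    have wl: "lf n p k w = 0" if "k < E" for k
      using wF[rule_format, of "Suc k"] that unfolding F_def by simp
    define v where "v = (\<lambda>j. if j < E then e j else w)"
    have vW: "\<forall>j<Suc E. v j \<in> Wsp n" unfolding v_def using eW wW by auto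
    define U where "U = (\<lambda>a i. \<Sum>j<Suc E. a j * v j i)"
    have UW: "U a \<in> Wsp n" for a unfolding U_def by (rule W_sum[OF vW])
    have lpU: "lf n p k (U a) = a k" if "k < E" for k a
    proof -
      have "lf n p k (U a) = (\<Sum>j<Suc E. a j * lf n p k (v j))" unfolding U_def by (rule lf_lin_sum)
      also have "\<dots> = (\<Sum>j<Suc E. if j = k then a k else 0)"
        by (rule sum.cong) (auto simp: v_def el wl that)
      also have "\<dots> = a k" using that by simp
      finally show ?thesis .
    qed
    have kill: "\<forall>y\<in>Cset E n x. Bf n y w w = 0"
    proof
      fix y assume y: "y \<in> Cset E n x"
      define H where "H = (\<lambda>j i. Bf n y (v j) (e i))"
      define rr where "rr = (\<lambda>j. Bf n y (v j) w)"
      show "Bf n y w w = 0"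
      proof (rule eps_arg[of E H rr])
        fix t :: real assume tpos: "t > 0"
        define tc where "tc = complex_of_real t"
        have tc0: "tc \<noteq> 0" unfolding tc_def using tpos by simp
        have "(\<lambda>e. x e + tc * y e) \<in> Mvar E n" using y unfolding Cset_def by blast
        then obtain q where q: "(\<lambda>e. x e + tc * y e) = mmap E n q" unfolding Mvar_def by auto
        define G where "G = (\<lambda>k a. lf n q k (U a))"
        have lG: "\<forall>k<E. linf (Suc E) (G k)"
        proof (intro allI impI)
          fix k assume "k < E"
          show "linf (Suc E) (G k)" unfolding linf_def G_def U_def
          proof (intro ballI allI)
            fix z z' :: "nat \<Rightarrow> complex" and a b :: complex
            show "lf n q k (\<lambda>i. \<Sum>j<Suc E. (a * z j + b * z' j) * v j i)
                = a * lf n q k (\<lambda>i. \<Sum>j<Suc E. z j * v j i) + b * lf n q k (\<lambda>i. \<Sum>j<Suc E. z' j * v j i)"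
              unfolding lf_lin_sum by (simp add: algebra_simps sum.distrib sum_distrib_left del: sum.lessThan_Suc)
          qed
        qed
        obtain a where aZ: "a \<in> Zs (Suc E)" and anz: "\<exists>j<Suc E. a j \<noteq> 0" and aG: "\<forall>k<E. G k a = 0"
          using kernel_exists[of E "Suc E" G] lG by auto
        have B0: "Bf n x (U a) h + tc * Bf n y (U a) h = 0" if hW: "h \<in> Wsp n" for h
        proof -
          have "Bf n (\<lambda>e. x e + tc * y e) (U a) h = (\<Sum>k<E. lf n q k (U a) * lf n q k h)"
            unfolding q by (rule Bf_mmap[OF UW hW])
          also have "\<dots> = 0" using aG unfolding G_def by simp
          finally show ?thesis unfolding Bf_add .
        qed
        have BxU: "Bf n x (U a) h = (\<Sum>k<E. a k * lf n p k h)" if hW: "h \<in> Wsp n" for h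
          unfolding x using Bf_mmap[OF UW hW, of E p] lpU by simp
        have ByU: "Bf n y (U a) h = (\<Sum>j<Suc E. a j * Bf n y (v j) h)" for h
          unfolding U_def by (rule Bf_lin1)
        have eq1: "\<forall>i<E. a i = - of_real t * (\<Sum>j<Suc E. a j * H j i)"
        proof (intro allI impI)
          fix i assume i: "i < E"
          have "Bf n x (U a) (e i) = a i"
          proof -
            have "Bf n x (U a) (e i) = (\<Sum>k<E. if k = i then a k else 0)"
              unfolding BxU[OF eW[rule_format, OF i]] by (rule sum.cong) (auto simp: el i)
            then show ?thesis using i by simp
          qed
          then have "a i + tc * (\<Sum>j<Suc E. a j * H j i) = 0"
            using B0[OF eW[rule_format, OF i]] unfolding ByU H_def by simp
          then show "a i = - of_real t * (\<Sum>j<Suc E. a j * H j i)"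
            unfolding tc_def by (simp add: eq_neg_iff_add_eq_0)
        qed
        have eq2: "(\<Sum>j<E. a j * rr j) + a E * Bf n y w w = 0"
        proof -
          have "Bf n x (U a) w = 0" unfolding BxU[OF wW] using wl by simp
          then have "tc * (\<Sum>j<Suc E. a j * Bf n y (v j) w) = 0"
            using B0[OF wW] unfolding ByU by simp
          then have "(\<Sum>j<Suc E. a j * Bf n y (v j) w) = 0" using tc0 by simp
          then show ?thesis unfolding rr_def by (simp add: v_def)
        qed
        show "\<exists>a. (\<exists>j<Suc E. a j \<noteq> 0) \<and> (\<forall>i<E. a i = - of_real t * (\<Sum>j<Suc E. a j * H j i))
            \<and> (\<Sum>j<E. a j * rr j) + a E * Bf n y w w = 0"
          using anz eq1 eq2 by blast
      qed
    qed
    have kill2: "\<forall>y\<in>cvecs n. Bf n y w w = 0" using Bf_kill[OF kill] span by blast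
    obtain i0 where i0: "i0 < n" "w i0 \<noteq> 0" using wnz by blast
    have "\<exists>j0<n. j0 \<noteq> i0 \<and> w j0 \<noteq> 0"
    proof (rule ccontr)
      assume "\<not> ?thesis"
      then have "(\<Sum>i<n. w i) = (\<Sum>i<n. if i = i0 then w i0 else 0)" by (intro sum.cong) auto
      also have "\<dots> = w i0" using i0 by simp
      finally show False using wW i0 unfolding Wsp_def by simp
    qed
    then obtain j0 where j0: "j0 < n" "j0 \<noteq> i0" "w j0 \<noteq> 0" by blast
    define i1 where "i1 = min i0 j0"
    define j1 where "j1 = max i0 j0"
    have ij1: "i1 < j1" "j1 < n" unfolding i1_def j1_def using i0 j0 by auto
    have wij: "w i1 * w j1 \<noteq> 0" unfolding i1_def j1_def using i0 j0 by (auto simp: min_def max_def)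
    have "ev (i1, j1) \<in> cvecs n" using ij1 by (intro ev_cvecs) (simp add: edges_def)
    then have "Bf n (ev (i1, j1)) w w = 0" using kill2 by blast
    then show ?thesis using Bf_ev[OF ij1] wij by simp
  qed
qed



lemma char:
  assumes E: "E \<ge> 1" and nE: "n \<ge> E + 2" and x: "x \<in> Mvar E n"
  shows "x \<in> Mvar (E - 1) n \<longleftrightarrow> cvecs n \<subseteq> cspn (Cset E n x)"
proof
  assume "x \<in> Mvar (E - 1) n"
  then have "Mvar 1 n \<subseteq> Cset E n x" using easy_dir[OF E] by blast
  then show "cvecs n \<subseteq> cspn (Cset E n x)" using span_M1[of n] cspn_mono by blast
next
  assume "cvecs n \<subseteq> cspn (Cset E n x)"
  moreover obtain p where "x = mmap E n p" using x unfolding Mvar_def by auto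
  ultimately show "x \<in> Mvar (E - 1) n" using hard_dir[OF E nE] by blast
qed

lemma Cset_cvecs: "x \<in> cvecs n \<Longrightarrow> Cset E n x \<subseteq> cvecs n"
proof
  fix y assume x: "x \<in> cvecs n" and "y \<in> Cset E n x"
  then have "(\<lambda>e. x e + 1 * y e) \<in> Mvar E n" unfolding Cset_def by blast
  then have "(\<lambda>e. x e + y e) \<in> cvecs n" using Mvar_cvecs by auto
  then show "y \<in> cvecs n" using x unfolding cvecs_def by auto
qed

lemma aut_step:
  assumes E: "E \<ge> 2" and nE: "n \<ge> E + 2" and LA: "linear_automorphism n A (Mvar E n)"
  shows "linear_automorphism n A (Mvar (E - 1) n)"
proof -
  define f where "f = matvec n A"
  define V where "V = Mvar E n"
  define V' where "V' = Mvar (E - 1) n"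
  have ns: "nonsingular n A" and bij: "bij_betw f V V" using LA unfolding linear_automorphism_def f_def V_def by auto
  have fV: "f ` V = V" using bij by (simp add: bij_betw_def)
  have Vc: "V \<subseteq> cvecs n" unfolding V_def by (rule Mvar_cvecs)
  have V'V: "V' \<subseteq> V" unfolding V'_def V_def by (rule Mvar_mono) simp
  have inj: "inj_on f (cvecs n)"
  proof (rule inj_onI)
    fix u v assume u: "u \<in> cvecs n" and v: "v \<in> cvecs n" and fuv: "f u = f v"
    have d: "(\<lambda>e. u e + (-1) * v e) \<in> cvecs n" using u v by (intro cvecs_add cvecs_scale)
    have "matvec n A (\<lambda>e. u e + (-1) * v e) = (\<lambda>_. 0)"
      using fuv unfolding f_def matvec_add matvec_scale by auto
    then have "(\<lambda>e. u e + (-1) * v e) = (\<lambda>_. 0)" using ns d unfolding nonsingular_def by blast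
    then show "u = v" by (auto simp: fun_eq_iff dest: fun_cong)
  qed
  have surj: "cvecs n \<subseteq> f ` cvecs n"
  proof -
    have "cvecs n \<subseteq> cspn (Mvar 1 n)" by (rule span_M1)
    also have "\<dots> \<subseteq> cspn V" unfolding V_def using E by (intro cspn_mono Mvar_mono) simp
    also have "\<dots> = cspn (f ` V)" using fV by simp
    also have "\<dots> \<subseteq> f ` cspn V" unfolding f_def by (rule cspn_image)
    also have "\<dots> \<subseteq> f ` cvecs n" using cspn_sub[OF Vc] by blast
    finally show ?thesis .
  qed
  have fcv: "f u \<in> cvecs n" for u unfolding f_def by (rule matvec_cvecs)
  have fadd: "f (\<lambda>e. u e + t * y e) = (\<lambda>e. f u e + t * f y e)" for u y t
    unfolding f_def matvec_add matvec_scale ..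
  have C1: "f ` Cset E n x \<subseteq> Cset E n (f x)" for x
  proof
    fix y' assume "y' \<in> f ` Cset E n x"
    then obtain y where y: "y \<in> Cset E n x" "y' = f y" by auto
    show "y' \<in> Cset E n (f x)" unfolding Cset_def
    proof (intro CollectI allI)
      fix t
      have "(\<lambda>e. x e + t * y e) \<in> V" using y unfolding Cset_def V_def by blast
      then have "f (\<lambda>e. x e + t * y e) \<in> V" using fV by blast
      then show "(\<lambda>e. f x e + t * y' e) \<in> Mvar E n" unfolding fadd y(2) V_def .
    qed
  qed
  have C2: "Cset E n (f x) \<subseteq> f ` Cset E n x" if xV: "x \<in> V" for x
  proof
    fix y' assume y': "y' \<in> Cset E n (f x)"
    have "y' \<in> cvecs n" using Cset_cvecs[OF fcv] y' by blast
    then obtain y where y: "y \<in> cvecs n" "y' = f y" using surj by blast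
    have xc: "x \<in> cvecs n" using xV Vc by blast
    have "y \<in> Cset E n x" unfolding Cset_def
    proof (intro CollectI allI)
      fix t
      have "(\<lambda>e. f x e + t * y' e) \<in> V" using y' unfolding Cset_def V_def by blast
      then have "f (\<lambda>e. x e + t * y e) \<in> f ` V" unfolding fadd y(2) using fV by simp
      then obtain z where z: "z \<in> V" "f (\<lambda>e. x e + t * y e) = f z" by auto
      have "(\<lambda>e. x e + t * y e) \<in> cvecs n" using xc y(1) by (intro cvecs_add cvecs_scale)
      then have "(\<lambda>e. x e + t * y e) = z" using inj z Vc by (auto dest: inj_onD)
      then show "(\<lambda>e. x e + t * y e) \<in> Mvar E n" using z unfolding V_def by simp
    qed
    then show "y' \<in> f ` Cset E n x" using y by blast
  qed
  define \<Phi> where "\<Phi> = (\<lambda>x. cvecs n \<subseteq> cspn (Cset E n x))"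
  have P1: "\<Phi> (f x)" if "x \<in> V" "\<Phi> x" for x
  proof -
    have "cvecs n \<subseteq> f ` cvecs n" by (rule surj)
    also have "\<dots> \<subseteq> f ` cspn (Cset E n x)" using that(2) unfolding \<Phi>_def by blast
    also have "\<dots> \<subseteq> cspn (f ` Cset E n x)" unfolding f_def by (rule image_cspn)
    also have "\<dots> \<subseteq> cspn (Cset E n (f x))" by (rule cspn_mono[OF C1])
    finally show ?thesis unfolding \<Phi>_def .
  qed
  have P2: "\<Phi> x" if xV: "x \<in> V" and "\<Phi> (f x)" for x
  proof -
    have xc: "x \<in> cvecs n" using xV Vc by blast
    have sub: "cspn (Cset E n x) \<subseteq> cvecs n" by (rule cspn_sub[OF Cset_cvecs[OF xc]])
    show ?thesis unfolding \<Phi>_def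
    proof
      fix v assume v: "v \<in> cvecs n"
      have "f v \<in> cspn (Cset E n (f x))" using that(2) fcv unfolding \<Phi>_def by blast
      also have "\<dots> \<subseteq> cspn (f ` Cset E n x)" by (rule cspn_mono[OF C2[OF xV]])
      also have "\<dots> \<subseteq> f ` cspn (Cset E n x)" unfolding f_def by (rule cspn_image)
      finally obtain s where s: "s \<in> cspn (Cset E n x)" "f v = f s" by auto
      have "v = s" using inj v s sub by (auto dest: inj_onD)
      then show "v \<in> cspn (Cset E n x)" using s by simp
    qed
  qed
  have E1: "E \<ge> 1" using E by simp
  have chr: "x \<in> V' \<longleftrightarrow> \<Phi> x" if "x \<in> V" for x
    unfolding V'_def \<Phi>_def using char[OF E1 nE] that unfolding V_def by blast
  have "bij_betw f V' V'"
  proof (rule bij_betw_imageI)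
    show "inj_on f V'" using inj V'V Vc by (blast intro: inj_on_subset)
    show "f ` V' = V'"
    proof
      show "f ` V' \<subseteq> V'"
      proof
        fix z assume "z \<in> f ` V'"
        then obtain x where x: "x \<in> V'" "z = f x" by auto
        have xV: "x \<in> V" using x V'V by blast
        have fxV: "f x \<in> V" using xV fV by blast
        have "\<Phi> x" using chr[OF xV] x by simp
        then have "\<Phi> (f x)" using P1 xV by blast
        then show "z \<in> V'" using chr[OF fxV] x by simp
      qed
      show "V' \<subseteq> f ` V'"
      proof
        fix z assume z: "z \<in> V'"
        then have "z \<in> f ` V" using V'V fV by blast
        then obtain x where x: "x \<in> V" "z = f x" by auto
        have "\<Phi> (f x)" using chr[of z] z V'V x by blast
        then have "\<Phi> x" using P2 x by blast
        then have "x \<in> V'" using chr[OF x(1)] by simp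
        then show "z \<in> f ` V'" using x by blast
      qed
    qed
  qed
  then show ?thesis using ns unfolding linear_automorphism_def f_def V'_def by simp
qed

lemma aut_down:
  "d \<ge> 1 \<Longrightarrow> n \<ge> d + 2 \<Longrightarrow> linear_automorphism n A (Mvar d n) \<Longrightarrow> linear_automorphism n A (Mvar 1 n)"
proof (induction d)
  case 0
  then show ?case by simp
next
  case (Suc d)
  show ?case
  proof (cases "d = 0")
    case True
    then show ?thesis using Suc.prems by simp
  next
    case False
    have "linear_automorphism n A (Mvar (Suc d - 1) n)"
      using aut_step[of "Suc d" n A] Suc.prems False by simp
    then show ?thesis using Suc.IH Suc.prems False by simp
  qed
qed

theorem lemma3p8:
  fixes d n :: nat and A :: "(nat \<times> nat) \<Rightarrow> (nat \<times> nat) \<Rightarrow> complex"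
  assumes "d \<ge> 1" and "n \<ge> d + 2"
    and "linear_automorphism n A (Mvar d n)"
  shows "linear_automorphism n A (Mvar 1 n)"
  using aut_down assms by blast

end
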